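(* Let $n\ge 1$ and let $\Psi:[0,1]^4\to\mathbb{R}_+$ be a performance metric that satisfies TP monotonicity (defined in the context). Then $\Psi$ satisfies the probability ranking principle: for any set $\mathbf{x}=\{x_1,\dots,x_n\}$ of instances and any conditional label distribution of the form $\mathbb{P}(\mathbf{y}\mid\mathbf{x})=\prod_{i=1}^n \eta_i^{y_i}(1-\eta_i)^{1-y_i}$ with $\eta_i=\mathbb{P}(Y=1\mid x_i)\in[0,1]$, every maximizer $\mathbf{s}^*\in\arg\max_{\mathbf{s}\in\{0,1\}^n}U_\Psi(\mathbf{s};\mathbb{P})$ satisfies \[\min\{\eta_i : s_i^*=1\}\ \ge\ \max\{\eta_i : s_i^*=0\}.\]
   Context: Labels are binary, $\mathcal{Y}=\{0,1\}$, and instance–label pairs are drawn i.i.d. from a distribution $\mathbb{P}$, so that given instances $\mathbf{x}$ the labels are conditionally independent with $\mathbb{P}(Y=1\mid x_i)=\eta_i$. For predictions $\mathbf{s}\in\{0,1\}^n$ and labels $\mathbf{y}\in\{0,1\}^n$ the empirical confusion matrix has entries $\widehat{TP}=\frac1n\sum_i s_iy_i$, $\widehat{TN}=\frac1n\sum_i(1-s_i)(1-y_i)$, $\widehat{FP}=\frac1n\sum_i s_i(1-y_i)$, $\widehat{FN}=\frac1n\sum_i(1-s_i)y_i$. A metric $\Psi:[0,1]^4\to\mathbb{R}_+$ is evaluated on these four entries, written $\Psi(\mathbf{s},\mathbf{y})$. The (decision-theoretic) utility is $U_\Psi(\mathbf{s};\mathbb{P})=\mathbb{E}_{\mathbf{y}\sim\mathbb{P}(\cdot\mid\mathbf{x})}\Psi(\mathbf{s},\mathbf{y})$.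 Writing $u=\widehat{TP}(\mathbf{s},\mathbf{y})$, $v=v(\mathbf{s})=\frac1n\sum_i s_i$, $p=p(\mathbf{y})=\frac1n\sum_i y_i$, the confusion matrix is determined by $(u,v,p)$ (namely $\widehat{FP}=v-u$, $\widehat{FN}=p-u$, $\widehat{TN}=1-v-p+u$), so there is a function $\Phi:[0,1]^3\to\mathbb{R}_+$ with $\Psi(\mathbf{s},\mathbf{y})=\Phi(\widehat{TP}(\mathbf{s},\mathbf{y}),v(\mathbf{s}),p(\mathbf{y}))$. $\Psi$ is called TP monotonic if whenever $u_1>u_2$ and $v,p$ are fixed, $\Phi(u_1,v,p)>\Phi(u_2,v,p)$. *)

theory Defs
  imports Complex_Main
begin

definition emp_TP :: "nat \<Rightarrow> bool list \<Rightarrow> bool list \<Rightarrow> real" where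
  "emp_TP n s y = (\<Sum>i<n. if s!i \<and> y!i then 1 else 0) / real n"

definition emp_TN :: "nat \<Rightarrow> bool list \<Rightarrow> bool list \<Rightarrow> real" where
  "emp_TN n s y = (\<Sum>i<n. if \<not> s!i \<and> \<not> y!i then 1 else 0) / real n"

definition emp_FP :: "nat \<Rightarrow> bool list \<Rightarrow> bool list \<Rightarrow> real" where
  "emp_FP n s y = (\<Sum>i<n. if s!i \<and> \<not> y!i then 1 else 0) / real n"

definition emp_FN :: "nat \<Rightarrow> bool list \<Rightarrow> bool list \<Rightarrow> real" where
  "emp_FN n s y = (\<Sum>i<n. if \<not> s!i \<and> y!i then 1 else 0) / real n"

definition metric_eval ::
  "(real \<Rightarrow> real \<Rightarrow> real \<Rightarrow> real \<Rightarrow> real) \<Rightarrow> nat \<Rightarrow> bool list \<Rightarrow> bool list \<Rightarrow> real" where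
  "metric_eval Psi n s y = Psi (emp_TP n s y) (emp_TN n s y) (emp_FP n s y) (emp_FN n s y)"

definition label_prob :: "(nat \<Rightarrow> real) \<Rightarrow> nat \<Rightarrow> bool list \<Rightarrow> real" where
  "label_prob eta n y = (\<Prod>i<n. if y!i then eta i else 1 - eta i)"

definition utility ::
  "(real \<Rightarrow> real \<Rightarrow> real \<Rightarrow> real \<Rightarrow> real) \<Rightarrow> (nat \<Rightarrow> real) \<Rightarrow> nat \<Rightarrow> bool list \<Rightarrow> real" where
  "utility Psi eta n s = (\<Sum>y\<in>{ys. length ys = n}. label_prob eta n y * metric_eval Psi n s y)"

definition Phi :: "(real \<Rightarrow> real \<Rightarrow> real \<Rightarrow> real \<Rightarrow> real) \<Rightarrow> real \<Rightarrow> real \<Rightarrow> real \<Rightarrow> real" where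
  "Phi Psi u v p = Psi u (1 - v - p + u) (v - u) (p - u)"

definition valid_uvp :: "real \<Rightarrow> real \<Rightarrow> real \<Rightarrow> bool" where
  "valid_uvp u v p \<longleftrightarrow> u \<in> {0..1} \<and> 1 - v - p + u \<in> {0..1} \<and> v - u \<in> {0..1} \<and> p - u \<in> {0..1}"

definition TP_monotonic :: "(real \<Rightarrow> real \<Rightarrow> real \<Rightarrow> real \<Rightarrow> real) \<Rightarrow> bool" where
  "TP_monotonic Psi \<longleftrightarrow>
     (\<forall>u1 u2 v p. valid_uvp u1 v p \<and> valid_uvp u2 v p \<and> u1 > u2 \<longrightarrow> Phi Psi u1 v p > Phi Psi u2 v p)"

end

theory Submission
  imports Defs
begin

definition swp :: "nat \<Rightarrow> nat \<Rightarrow> bool list \<Rightarrow> bool list" where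
  "swp i j y = y[i := y!j, j := y!i]"

lemma swp_length[simp]: "length (swp i j y) = length y"
  by (simp add: swp_def)

lemma swp_nth:
  assumes "i < length y" "j < length y" "i \<noteq> j" "k < length y"
  shows "swp i j y ! k = (if k = i then y!j else if k = j then y!i else y!k)"
  using assms by (simp add: swp_def nth_list_update)

lemma swp_swp:
  assumes "i < length y" "j < length y" "i \<noteq> j"
  shows "swp i j (swp i j y) = y"
proof (rule nth_equalityI)
  show "length (swp i j (swp i j y)) = length y" by simp
  fix k assume "k < length (swp i j (swp i j y))"
  then show "swp i j (swp i j y) ! k = y ! k"
    using assms by (simp add: swp_nth)
qed

lemma sum_swp:
  assumes "i < n" "j < n" "i \<noteq> j" "length s = n" "length y = n"
  shows "(\<Sum>k<n. f (swp i j s ! k) (swp i j y ! k)) = (\<Sum>k<n. f (s!k) (y!k))"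
proof -
  define t where "t = (\<lambda>k::nat. if k = i then j else if k = j then i else k)"
  have "(\<Sum>k<n. f (swp i j s ! k) (swp i j y ! k)) = (\<Sum>k<n. f (s ! t k) (y ! t k))"
    by (rule sum.cong) (use assms in \<open>auto simp: swp_nth t_def\<close>)
  also have "\<dots> = (\<Sum>k<n. f (s!k) (y!k))"
    by (rule sum.reindex_bij_witness[of _ t t]) (use assms in \<open>auto simp: t_def\<close>)
  finally show ?thesis .
qed

definition cnt :: "nat \<Rightarrow> bool list \<Rightarrow> real" where
  "cnt n s = (\<Sum>k<n. if s!k then 1 else 0) / real n"

lemma sum01: "0 \<le> (\<Sum>k<n. if P k then 1 else 0::real) \<and> (\<Sum>k<n. if P k then 1 else 0::real) \<le> real n"
proof -
  have "(\<Sum>k<n. if P k then 1 else 0::real) \<le> (\<Sum>k<n. 1)"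
    by (rule sum_mono) auto
  then show ?thesis by (auto intro: sum_nonneg)
qed

lemma frac01: "n \<ge> 1 \<Longrightarrow> (\<Sum>k<n. if P k then 1 else 0::real) / real n \<in> {0..1}"
  using sum01[of P n] by (auto simp: divide_le_eq_1)

lemma metric_Phi:
  assumes "n \<ge> 1"
  shows "metric_eval Psi n s y = Phi Psi (emp_TP n s y) (cnt n s) (cnt n y)
       \<and> valid_uvp (emp_TP n s y) (cnt n s) (cnt n y)"
proof -
  let ?I = "\<lambda>b. if b then 1 else (0::real)"
  have n0: "real n \<noteq> 0" using assms by simp
  have e1: "(\<Sum>k<n. ?I (\<not> s!k \<and> \<not> y!k)) = real n - (\<Sum>k<n. ?I (s!k)) - (\<Sum>k<n. ?I (y!k)) + (\<Sum>k<n. ?I (s!k \<and> y!k))"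
  proof -
    have "(\<Sum>k<n. ?I (\<not> s!k \<and> \<not> y!k)) = (\<Sum>k<n. 1 - ?I (s!k) - ?I (y!k) + ?I (s!k \<and> y!k))"
      by (rule sum.cong) auto
    also have "\<dots> = real n - (\<Sum>k<n. ?I (s!k)) - (\<Sum>k<n. ?I (y!k)) + (\<Sum>k<n. ?I (s!k \<and> y!k))"
      by (simp add: sum.distrib sum_subtractf)
    finally show ?thesis .
  qed
  have e2: "(\<Sum>k<n. ?I (s!k \<and> \<not> y!k)) = (\<Sum>k<n. ?I (s!k)) - (\<Sum>k<n. ?I (s!k \<and> y!k))"
  proof -
    have "(\<Sum>k<n. ?I (s!k \<and> \<not> y!k)) = (\<Sum>k<n. ?I (s!k) - ?I (s!k \<and> y!k))"
      by (rule sum.cong) auto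
    then show ?thesis by (simp add: sum_subtractf)
  qed
  have e3: "(\<Sum>k<n. ?I (\<not> s!k \<and> y!k)) = (\<Sum>k<n. ?I (y!k)) - (\<Sum>k<n. ?I (s!k \<and> y!k))"
  proof -
    have "(\<Sum>k<n. ?I (\<not> s!k \<and> y!k)) = (\<Sum>k<n. ?I (y!k) - ?I (s!k \<and> y!k))"
      by (rule sum.cong) auto
    then show ?thesis by (simp add: sum_subtractf)
  qed
  have TN: "emp_TN n s y = 1 - cnt n s - cnt n y + emp_TP n s y"
    unfolding emp_TN_def cnt_def emp_TP_def e1 using n0 by (simp add: field_simps)
  have FP: "emp_FP n s y = cnt n s - emp_TP n s y"
    unfolding emp_FP_def cnt_def emp_TP_def e2 using n0 by (simp add: field_simps)
  have FN: "emp_FN n s y = cnt n y - emp_TP n s y"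
    unfolding emp_FN_def cnt_def emp_TP_def e3 using n0 by (simp add: field_simps)
  have b: "emp_TP n s y \<in> {0..1}" "emp_TN n s y \<in> {0..1}" "emp_FP n s y \<in> {0..1}" "emp_FN n s y \<in> {0..1}"
    unfolding emp_TP_def emp_TN_def emp_FP_def emp_FN_def using frac01[OF assms] by auto
  show ?thesis
    using b unfolding metric_eval_def Phi_def valid_uvp_def TN[symmetric] FP[symmetric] FN[symmetric]
    by simp
qed


lemma metric_swp:
  assumes "i < n" "j < n" "i \<noteq> j" "length s = n" "length y = n"
  shows "metric_eval Psi n (swp i j s) (swp i j y) = metric_eval Psi n s y"
  unfolding metric_eval_def emp_TP_def emp_TN_def emp_FP_def emp_FN_def
  using sum_swp[OF assms, of "\<lambda>a b. if a \<and> b then 1 else (0::real)"]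
    sum_swp[OF assms, of "\<lambda>a b. if \<not> a \<and> \<not> b then 1 else (0::real)"]
    sum_swp[OF assms, of "\<lambda>a b. if a \<and> \<not> b then 1 else (0::real)"]
    sum_swp[OF assms, of "\<lambda>a b. if \<not> a \<and> b then 1 else (0::real)"]
  by simp

lemma cnt_swp:
  assumes "i < n" "j < n" "i \<noteq> j" "length y = n"
  shows "cnt n (swp i j y) = cnt n y"
  unfolding cnt_def using sum_swp[OF assms(1-3) assms(4) assms(4), of "\<lambda>a b. if b then 1 else (0::real)"]
  by simp

lemma TP_swp:
  assumes "i < n" "j < n" "i \<noteq> j" "length s = n" "length y = n"
    and "s!i" "\<not> s!j" "y!i" "\<not> y!j"
  shows "emp_TP n s y = emp_TP n s (swp i j y) + 1 / real n"
proof -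
  let ?I = "\<lambda>b. if b then 1 else (0::real)"
  have "(\<Sum>k<n. ?I (s!k \<and> y!k)) = (\<Sum>k<n. ?I (s!k \<and> swp i j y!k) + (if k = i then 1 else 0))"
    by (rule sum.cong) (use assms in \<open>auto simp: swp_nth\<close>)
  also have "\<dots> = (\<Sum>k<n. ?I (s!k \<and> swp i j y!k)) + 1"
    using assms(1) by (simp add: sum.distrib)
  finally show ?thesis unfolding emp_TP_def by (simp add: add_divide_distrib)
qed

lemma metric_strict:
  assumes "n \<ge> 1" "TP_monotonic Psi" "i < n" "j < n" "i \<noteq> j" "length s = n" "length y = n"
    and "s!i" "\<not> s!j" "y!i" "\<not> y!j"
  shows "metric_eval Psi n s (swp i j y) < metric_eval Psi n s y"
proof -
  have a: "metric_eval Psi n s y = Phi Psi (emp_TP n s y) (cnt n s) (cnt n y)"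
     "valid_uvp (emp_TP n s y) (cnt n s) (cnt n y)" using metric_Phi[OF assms(1)] by auto
  have b: "metric_eval Psi n s (swp i j y) = Phi Psi (emp_TP n s (swp i j y)) (cnt n s) (cnt n y)"
     "valid_uvp (emp_TP n s (swp i j y)) (cnt n s) (cnt n y)"
    using metric_Phi[OF assms(1), of Psi s "swp i j y"] cnt_swp[OF assms(3-5,7)] by auto
  have "emp_TP n s y > emp_TP n s (swp i j y)"
    using TP_swp[OF assms(3-11)] assms(1) by simp
  then show ?thesis using a b assms(2) unfolding TP_monotonic_def by auto
qed

lemma label_split:
  assumes "i < n" "j < n" "i \<noteq> j"
  shows "label_prob eta n y = (if y!i then eta i else 1 - eta i) * (if y!j then eta j else 1 - eta j)
     * (\<Prod>k\<in>{..<n} - {i, j}. if y!k then eta k else 1 - eta k)"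
proof -
  let ?f = "\<lambda>k. if y!k then eta k else 1 - eta k"
  have "label_prob eta n y = ?f i * prod ?f ({..<n} - {i})"
    unfolding label_prob_def using assms by (simp add: prod.remove)
  also have "prod ?f ({..<n} - {i}) = ?f j * prod ?f ({..<n} - {i} - {j})"
    using assms by (intro prod.remove) auto
  also have "{..<n} - {i} - {j} = {..<n} - {i, j}" by auto
  finally show ?thesis by simp
qed

lemma rest_swp:
  assumes "i < n" "j < n" "i \<noteq> j" "length y = n"
  shows "(\<Prod>k\<in>{..<n} - {i, j}. if swp i j y!k then eta k else 1 - eta k)
       = (\<Prod>k\<in>{..<n} - {i, j}. if y!k then eta k else 1 - eta k)"
  by (rule prod.cong) (use assms in \<open>auto simp: swp_nth\<close>)


theorem theorem1:
  fixes Psi :: "real \<Rightarrow> real \<Rightarrow> real \<Rightarrow> real \<Rightarrow> real"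
    and eta :: "nat \<Rightarrow> real" and n :: nat and s :: "bool list"
  assumes "n \<ge> 1"
    and "\<forall>a b c d. a \<in> {0..1} \<and> b \<in> {0..1} \<and> c \<in> {0..1} \<and> d \<in> {0..1} \<longrightarrow> Psi a b c d \<ge> 0"
    and "TP_monotonic Psi"
    and "\<forall>i<n. eta i \<in> {0..1}"
    and "length s = n"
    and "\<forall>s'. length s' = n \<longrightarrow> utility Psi eta n s' \<le> utility Psi eta n s"
  shows "\<forall>i<n. \<forall>j<n. s!i \<and> \<not> s!j \<longrightarrow> eta i \<ge> eta j"
proof (intro allI impI, rule ccontr)
  fix i j assume ij: "i < n" "j < n" and sij: "s!i \<and> \<not> s!j" and ne: "\<not> eta j \<le> eta i"
  have ineq: "eta i < eta j" using ne by simp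
  have ij2: "i \<noteq> j" using sij by auto
  define L where "L = {ys::bool list. length ys = n}"
  define P where "P y = label_prob eta n y" for y
  define M where "M y = metric_eval Psi n s y" for y
  define D where "D y = (P (swp i j y) - P y) * M y" for y
  define A where "A t = (if t then eta i else 1 - eta i)" for t
  define B where "B t = (if t then eta j else 1 - eta j)" for t
  define C where "C y = (\<Prod>k\<in>{..<n} - {i, j}. if y!k then eta k else 1 - eta k)" for y
  have finL: "finite L" unfolding L_def by (rule finite_list_length)
  have inv: "\<And>y. y \<in> L \<Longrightarrow> swp i j (swp i j y) = y \<and> swp i j y \<in> L"
    unfolding L_def using ij ij2 swp_swp by auto
  have h1: "utility Psi eta n (swp i j s) = (\<Sum>y\<in>L. P (swp i j y) * M y)"
  proof -
    have "(\<Sum>y\<in>L. P (swp i j y) * metric_eval Psi n (swp i j s) (swp i j y))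
        = (\<Sum>y\<in>L. P y * metric_eval Psi n (swp i j s) y)"
      by (rule sum.reindex_bij_witness[of L "swp i j" "swp i j"]) (use inv in auto)
    moreover have "(\<Sum>y\<in>L. P (swp i j y) * metric_eval Psi n (swp i j s) (swp i j y))
        = (\<Sum>y\<in>L. P (swp i j y) * M y)"
      by (rule sum.cong) (use ij ij2 assms(5) metric_swp in \<open>auto simp: L_def M_def\<close>)
    ultimately show ?thesis unfolding utility_def P_def L_def by simp
  qed
  have h2: "utility Psi eta n s = (\<Sum>y\<in>L. P y * M y)"
    unfolding utility_def P_def M_def L_def by simp
  have h3: "(\<Sum>y\<in>L. D y) = (\<Sum>y\<in>L. D (swp i j y))"
    by (rule sum.reindex_bij_witness[of L "swp i j" "swp i j"]) (use inv in auto)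
  have h4: "\<And>y. y \<in> L \<Longrightarrow> D y + D (swp i j y) = (P (swp i j y) - P y) * (M y - M (swp i j y))"
    using inv unfolding D_def by (simp add: algebra_simps)
  have PP: "\<And>y. y \<in> L \<Longrightarrow> P y = A (y!i) * B (y!j) * C y \<and> P (swp i j y) = A (y!j) * B (y!i) * C y \<and> C y \<ge> 0"
  proof -
    fix y assume y: "y \<in> L"
    have "C (swp i j y) = C y" unfolding C_def using rest_swp[OF ij ij2] y by (auto simp: L_def)
    moreover have "swp i j y ! i = y!j" "swp i j y ! j = y!i" using y ij ij2 by (auto simp: L_def swp_nth)
    moreover have "C y \<ge> 0" unfolding C_def using assms(4) by (intro prod_nonneg) auto
    moreover have "P z = A (z!i) * B (z!j) * C z" for z
      unfolding P_def A_def B_def C_def by (rule label_split[OF ij ij2])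
    ultimately show "P y = A (y!i) * B (y!j) * C y \<and> P (swp i j y) = A (y!j) * B (y!i) * C y \<and> C y \<ge> 0"
      by simp
  qed
  have h5: "\<And>y. y \<in> L \<Longrightarrow> 0 \<le> (P (swp i j y) - P y) * (M y - M (swp i j y))"
  proof -
    fix y assume y: "y \<in> L"
    have ly: "length y = n" using y by (simp add: L_def)
    from PP[OF y] have p1: "P y = A (y!i) * B (y!j) * C y" and p2: "P (swp i j y) = A (y!j) * B (y!i) * C y"
      and c0: "C y \<ge> 0" by auto
    consider "y!i = y!j" | "y!i" "\<not> y!j" | "\<not> y!i" "y!j" by blast
    then show "0 \<le> (P (swp i j y) - P y) * (M y - M (swp i j y))"
    proof cases
      case 1 then show ?thesis using p1 p2 by (simp add: mult.commute)
    next
      case 2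
      have "P (swp i j y) - P y = C y * (eta j - eta i)" using p1 p2 2 unfolding A_def B_def
        by (simp add: algebra_simps)
      moreover have "M (swp i j y) < M y" unfolding M_def
        using metric_strict[OF assms(1,3) ij ij2 assms(5) ly] sij 2 by auto
      ultimately show ?thesis using c0 ineq by simp
    next
      case 3
      have "P (swp i j y) - P y = C y * (eta i - eta j)" using p1 p2 3 unfolding A_def B_def
        by (simp add: algebra_simps)
      moreover have "M y < M (swp i j y)"
      proof -
        have ly': "length (swp i j y) = n" using ly by simp
        have "swp i j y ! i" "\<not> swp i j y ! j" using 3 ij ij2 ly by (auto simp: swp_nth)
        then have "M (swp i j (swp i j y)) < M (swp i j y)" unfolding M_def
          using metric_strict[OF assms(1,3) ij ij2 assms(5) ly'] sij by auto
        then show ?thesis using inv[OF y] by simp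
      qed
      moreover have "C y * (eta i - eta j) \<le> 0" using c0 ineq by (simp add: mult_nonneg_nonpos)
      ultimately show ?thesis by (simp add: mult_nonpos_nonpos)
    qed
  qed
  define y0 where "y0 = map (\<lambda>k. if k = i then True else if k = j then False else eta k \<ge> 1/2) [0..<n]"
  have y0L: "y0 \<in> L" unfolding L_def y0_def by simp
  have y0i: "y0!i" "\<not> y0!j" using ij ij2 unfolding y0_def by auto
  have h6: "0 < (P (swp i j y0) - P y0) * (M y0 - M (swp i j y0))"
  proof -
    from PP[OF y0L] have p1: "P y0 = A (y0!i) * B (y0!j) * C y0" and p2: "P (swp i j y0) = A (y0!j) * B (y0!i) * C y0"
      by auto
    have cpos: "C y0 > 0" unfolding C_def
    proof (intro prod_pos)
      fix k assume k: "k \<in> {..<n} - {i, j}"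
      then have "y0!k = (eta k \<ge> 1/2)" unfolding y0_def by auto
      then show "0 < (if y0!k then eta k else 1 - eta k)" by auto
    qed
    have "P (swp i j y0) - P y0 = C y0 * (eta j - eta i)" using p1 p2 y0i unfolding A_def B_def
      by (simp add: algebra_simps)
    moreover have "M (swp i j y0) < M y0" unfolding M_def
      using metric_strict[OF assms(1,3) ij ij2 assms(5)] y0L sij y0i by (auto simp: L_def)
    ultimately show ?thesis using cpos ineq by simp
  qed
  have "0 < (\<Sum>y\<in>L. D y + D (swp i j y))"
    using sum_pos2[OF finL y0L, of "\<lambda>y. D y + D (swp i j y)"] h4 h5 h6 y0L by simp
  also have "\<dots> = 2 * (\<Sum>y\<in>L. D y)" using h3 by (simp add: sum.distrib)
  also have "(\<Sum>y\<in>L. D y) = utility Psi eta n (swp i j s) - utility Psi eta n s"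
    unfolding h1 h2 D_def by (simp add: sum_subtractf algebra_simps)
  finally have "utility Psi eta n s < utility Psi eta n (swp i j s)" by simp
  moreover have "utility Psi eta n (swp i j s) \<le> utility Psi eta n s" using assms(5,6) by simp
  ultimately show False by simp
qed

end
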